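(* Let $\pi \triangleright \Gamma \vdash^{(m,e)} t : L$ be a type derivation in the silly multi type system, with $L$ a linear type. (1) If $t \to_{wm} u$ then $m\geq 1$ and there is a derivation $\rho \triangleright \Gamma\vdash^{(m',e)} u : L$ with $m > m'$. (2) If $t\to_{we} u$ then $e\geq 1$ and there is a derivation $\rho\triangleright \Gamma\vdash^{(m,e')} u : L$ with $e>e'$. (3) If $t\to_{wgcv} u$ then there is a derivation $\rho\triangleright\Gamma\vdash^{(m,e)} u : L$ with $|\pi|>|\rho|$.
   Context: Terms: $t ::= x \mid \lambda x.t \mid t\,u \mid t[x\backslash u]$ ($t[x\backslash u]$ an explicit substitution binding $x$ in $t$; terms up to $\alpha$). Values $v ::= \lambda x.t$. Substitution contexts $S ::= \langle\cdot\rangle\mid S[x\backslash u]$. Weak contexts $W ::= \langle\cdot\rangle \mid W\,t \mid t\,W \mid t[x\backslash W] \mid W[x\backslash u]$; $W\langle\langle t\rangle\rangle$ is plugging without capture of free variables of $t$. Root rules: $S\langle\lambda x.t\rangle u\mapsto_m S\langle t[x\backslash u]\rangle$; $W\langle\langle x\rangle\rangle[x\backslash u]\mapsto_e W\langle\langle u\rangle\rangle[x\backslash u]$; $t[x\backslash S\langle v\rangle]\mapsto_{gcv} S\langle t\rangle$ if $x\notin\mathrm{fv}(t)$. $\to_{wm},\to_{we},\to_{wgcv}$ are their closures under weak contexts. Silly multi types: linear types $L ::= \mathtt{n} \mid M\multimap L$; multi types $M ::= [L_i]_{i\in I}$ finite multisets ($\mathbf{0}$ the empty one, $\uplus$ multiset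 sum). A type context $\Gamma$ maps variables to multi types, with finite domain $\{x\mid \Gamma(x)\neq\mathbf{0}\}$; $\uplus$ extends pointwise; $\Gamma\setminus\!\!\setminus x$ is $\Gamma$ with $x$ mapped to $\mathbf{0}$. Judgements $\Gamma\vdash^{(m,e)} t : T$ with $T$ linear or multi. Rules: (ax) $x:[L]\vdash^{(0,1)} x:L$; (many) from $(\Gamma_i\vdash^{(m_i,e_i)} t : L_i)_{i\in I}$, $I$ finite possibly empty, infer $\uplus_i\Gamma_i\vdash^{(\sum m_i,\sum e_i)} t : [L_i]_{i\in I}$; ($\mathrm{ax}_\lambda$) $\vdash^{(0,0)}\lambda x.t:\mathtt{n}$ with empty context; ($\lambda$) from $\Gamma\vdash^{(m,e)}t:L$ infer $\Gamma\setminus\!\!\setminus x\vdash^{(m,e)}\lambda x.t:\Gamma(x)\multimap L$; (@) from $\Gamma\vdash^{(m,e)} t : M\multimap L$ and $\Delta\vdash^{(m',e')} u : M\uplus[\mathtt{n}]$ infer $\Gamma\uplus\Delta\vdash^{(m+m'+1,e+e')} tu : L$; (ES) from $\Gamma\vdash^{(m,e)} t:L$ and $\Delta\vdash^{(m',e')}u:\Gamma(x)\uplus[\mathtt{n}]$ infer $(\Gamma\setminus\!\!\setminus x)\uplus\Delta\vdash^{(m+m',e+e')} t[x\backslash u]:L$. The size $|\pi|$ of a derivation is its number of rule instances other than (many). *)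

theory Defs
  imports Main "HOL-Library.Multiset"
begin

text \<open>Terms up to alpha-equivalence, represented with de Bruijn indices.
  Lam t binds index 0 in t; ES t u is the explicit substitution t[x\u],
  binding index 0 in t (not in u).\<close>

datatype trm = Var nat | Lam trm | App trm trm | ES trm trm

fun lift :: "nat \<Rightarrow> nat \<Rightarrow> trm \<Rightarrow> trm" where
  "lift k c (Var i) = Var (if i < c then i else i + k)"
| "lift k c (Lam t) = Lam (lift k (Suc c) t)"
| "lift k c (App t u) = App (lift k c t) (lift k c u)"
| "lift k c (ES t u) = ES (lift k (Suc c) t) (lift k c u)"

text \<open>lower c t decrements the free indices above c (used when c does not occur free).\<close>
fun lower :: "nat \<Rightarrow> trm \<Rightarrow> trm" where
  "lower c (Var i) = Var (if i < c then i else i - 1)"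
| "lower c (Lam t) = Lam (lower (Suc c) t)"
| "lower c (App t u) = App (lower c t) (lower c u)"
| "lower c (ES t u) = ES (lower (Suc c) t) (lower c u)"

fun occurs_free :: "nat \<Rightarrow> trm \<Rightarrow> bool" where
  "occurs_free c (Var i) = (i = c)"
| "occurs_free c (Lam t) = occurs_free (Suc c) t"
| "occurs_free c (App t u) = (occurs_free c t \<or> occurs_free c u)"
| "occurs_free c (ES t u) = (occurs_free (Suc c) t \<or> occurs_free c u)"

fun is_value :: "trm \<Rightarrow> bool" where
  "is_value (Lam t) = True"
| "is_value _ = False"

text \<open>Substitution contexts: S = <.>[x1\u1]...[xn\un], represented by the list
  [un, ..., u1] (outermost substitution first).\<close>
fun plugS :: "trm list \<Rightarrow> trm \<Rightarrow> trm" where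
  "plugS [] t = t"
| "plugS (u # us) t = ES (plugS us t) u"

datatype wctx = Hole | AppL wctx trm | AppR trm wctx | ESR trm wctx | ESL wctx trm

fun plugW :: "wctx \<Rightarrow> trm \<Rightarrow> trm" where
  "plugW Hole t = t"
| "plugW (AppL W u) t = App (plugW W t) u"
| "plugW (AppR u W) t = App u (plugW W t)"
| "plugW (ESR u W) t = ES u (plugW W t)"
| "plugW (ESL W u) t = ES (plugW W t) u"

fun depthW :: "wctx \<Rightarrow> nat" where
  "depthW Hole = 0"
| "depthW (AppL W u) = depthW W"
| "depthW (AppR u W) = depthW W"
| "depthW (ESR u W) = depthW W"
| "depthW (ESL W u) = Suc (depthW W)"

inductive root_m :: "trm \<Rightarrow> trm \<Rightarrow> bool" where
  "root_m (App (plugS S (Lam t)) u) (plugS S (ES t (lift (length S) 0 u)))"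

text \<open>W<<x>>[x\u] -> W<<u>>[x\u]: the variable bound by the outer ES sits at index
  depthW W inside the hole; u must be lifted over the ES binder and the binders of W.\<close>
inductive root_e :: "trm \<Rightarrow> trm \<Rightarrow> bool" where
  "root_e (ES (plugW W (Var (depthW W))) u) (ES (plugW W (lift (Suc (depthW W)) 0 u)) u)"

inductive root_gcv :: "trm \<Rightarrow> trm \<Rightarrow> bool" where
  "\<not> occurs_free 0 t \<Longrightarrow> is_value v \<Longrightarrow>
   root_gcv (ES t (plugS S v)) (plugS S (lift (length S) 0 (lower 0 t)))"

inductive wm :: "trm \<Rightarrow> trm \<Rightarrow> bool" where
  "root_m t u \<Longrightarrow> wm (plugW W t) (plugW W u)"

inductive we :: "trm \<Rightarrow> trm \<Rightarrow> bool" where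
  "root_e t u \<Longrightarrow> we (plugW W t) (plugW W u)"

inductive wgcv :: "trm \<Rightarrow> trm \<Rightarrow> bool" where
  "root_gcv t u \<Longrightarrow> wgcv (plugW W t) (plugW W u)"

datatype lty = N | Arr "lty multiset" lty

type_synonym ctx = "nat \<Rightarrow> lty multiset"

definition ctx_empty :: ctx where "ctx_empty = (\<lambda>_. {#})"
definition ctx_single :: "nat \<Rightarrow> lty \<Rightarrow> ctx" where
  "ctx_single x L = (\<lambda>i. if i = x then {#L#} else {#})"
definition ctx_sum :: "ctx \<Rightarrow> ctx \<Rightarrow> ctx" where
  "ctx_sum G D = (\<lambda>i. G i + D i)"
definition ctx_tail :: "ctx \<Rightarrow> ctx" where
  "ctx_tail G = (\<lambda>i. G (Suc i))"

text \<open>typed G t L m e s: there is a derivation of G |-(m,e) t : L of size s;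
  mtyped G t M m e s: the same for multi types (rule many), where the size
  counts all rule instances other than (many).\<close>
inductive typed :: "ctx \<Rightarrow> trm \<Rightarrow> lty \<Rightarrow> nat \<Rightarrow> nat \<Rightarrow> nat \<Rightarrow> bool"
  and mtyped :: "ctx \<Rightarrow> trm \<Rightarrow> lty multiset \<Rightarrow> nat \<Rightarrow> nat \<Rightarrow> nat \<Rightarrow> bool" where
  ax: "typed (ctx_single x L) (Var x) L 0 1 1"
| ax_lam: "typed ctx_empty (Lam t) N 0 0 1"
| lam: "typed G t L m e s \<Longrightarrow> typed (ctx_tail G) (Lam t) (Arr (G 0) L) m e (Suc s)"
| app: "typed G t (Arr M L) m e s \<Longrightarrow> mtyped D u (M + {#N#}) m' e' s' \<Longrightarrow>
        typed (ctx_sum G D) (App t u) L (m + m' + 1) (e + e') (s + s' + 1)"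
| es: "typed G t L m e s \<Longrightarrow> mtyped D u (G 0 + {#N#}) m' e' s' \<Longrightarrow>
        typed (ctx_sum (ctx_tail G) D) (ES t u) L (m + m') (e + e') (s + s' + 1)"
| many_empty: "mtyped ctx_empty t {#} 0 0 0"
| many_add: "typed G t L m e s \<Longrightarrow> mtyped D t M m' e' s' \<Longrightarrow>
        mtyped (ctx_sum G D) t (add_mset L M) (m + m') (e + e') (s + s')"

end

theory Submission
  imports Defs
begin


definition shiftc :: "nat \<Rightarrow> nat \<Rightarrow> ctx \<Rightarrow> ctx" where
  "shiftc k c G = (\<lambda>i. if i < c then G i else if i < c + k then {#} else G (i - k))"
definition lowc :: "nat \<Rightarrow> ctx \<Rightarrow> ctx" where
  "lowc c G = (\<lambda>i. if i < c then G i else G (Suc i))"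
definition msing :: "nat \<Rightarrow> lty multiset \<Rightarrow> ctx" where
  "msing c M = (\<lambda>i. if i = c then M else {#})"

lemmas cdefs = ctx_sum_def ctx_empty_def ctx_single_def ctx_tail_def shiftc_def lowc_def msing_def

lemma lift_0[simp]: "lift 0 c t = t"
  by (induction t arbitrary: c) auto

lemma lift_lift: "lift a c (lift b c t) = lift (a + b) c t"
  by (induction t arbitrary: c) auto

lemma ctx_sum_empty[simp]: "ctx_sum G ctx_empty = G" "ctx_sum ctx_empty G = G"
  by (auto simp: cdefs)

lemma ctx_sum_comm: "ctx_sum G D = ctx_sum D G"
  by (auto simp: cdefs add.commute)
lemma ctx_sum_assoc: "ctx_sum (ctx_sum G D) E = ctx_sum G (ctx_sum D E)"
  by (auto simp: cdefs add.assoc)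
lemma ctx_sum_lcomm: "ctx_sum G (ctx_sum D E) = ctx_sum D (ctx_sum G E)"
  by (auto simp: cdefs add_ac)

lemma typed_eq: "typed G t L m e s \<Longrightarrow> G = G' \<Longrightarrow> m = m' \<Longrightarrow> e = e' \<Longrightarrow> s = s' \<Longrightarrow> typed G' t L m' e' s'"
  by simp
lemma mtyped_eq: "mtyped G t L m e s \<Longrightarrow> G = G' \<Longrightarrow> m = m' \<Longrightarrow> e = e' \<Longrightarrow> s = s' \<Longrightarrow> mtyped G' t L m' e' s'"
  by simp

lemma ax': "typed (ctx_single x L) (Var x) L 0 (Suc 0) (Suc 0)"
  using typed_mtyped.ax by simp
lemma ax_lam': "typed ctx_empty (Lam t) N 0 0 (Suc 0)"
  using typed_mtyped.ax_lam by simp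

inductive_cases VarE: "typed G (Var x) L m e s"
inductive_cases LamE: "typed G (Lam t) L m e s"
inductive_cases AppE: "typed G (App t u) L m e s"
inductive_cases ESE: "typed G (ES t u) L m e s"
inductive_cases memptyE: "mtyped G t {#} m e s"

lemma mtyped_empty_iff: "mtyped G t {#} m e s \<longleftrightarrow> G = ctx_empty \<and> m = 0 \<and> e = 0 \<and> s = 0"
  by (auto elim: memptyE intro: typed_mtyped.intros)

lemma mtyped_split_aux:
  shows "typed G t L m e s \<Longrightarrow> True"
  and "mtyped D u M m e s \<Longrightarrow> \<forall>M1 M2. M = M1 + M2 \<longrightarrow> (\<exists>D1 D2 m1 m2 e1 e2 s1 s2. mtyped D1 u M1 m1 e1 s1 \<and> mtyped D2 u M2 m2 e2 s2
       \<and> D = ctx_sum D1 D2 \<and> m = m1 + m2 \<and> e = e1 + e2 \<and> s = s1 + s2)"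
proof (induction rule: typed_mtyped.inducts)
  case (many_empty t)
  then show ?case by (auto intro!: exI[of _ ctx_empty] typed_mtyped.intros)
next
  case (many_add G t L m e s D M m' e' s')
  show ?case
  proof (intro allI impI)
  fix M1 M2 assume prems: "add_mset L M = M1 + M2"
  show "\<exists>D1 D2 m1 m2 e1 e2 s1 s2. mtyped D1 t M1 m1 e1 s1 \<and> mtyped D2 t M2 m2 e2 s2
       \<and> ctx_sum G D = ctx_sum D1 D2 \<and> m + m' = m1 + m2 \<and> e + e' = e1 + e2 \<and> s + s' = s1 + s2"
  proof (cases "L \<in># M1")
    case True
    then obtain M1' where M1: "M1 = add_mset L M1'" by (metis multi_member_split)
    with prems have "M = M1' + M2" by simp
    from many_add.IH(2)[rule_format, OF this] obtain D1 D2 m1 m2 e1 e2 s1 s2 where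
      h: "mtyped D1 t M1' m1 e1 s1" "mtyped D2 t M2 m2 e2 s2" "D = ctx_sum D1 D2" "m' = m1 + m2" "e' = e1 + e2" "s' = s1 + s2" by blast
    have "mtyped (ctx_sum G D1) t M1 (m + m1) (e + e1) (s + s1)"
      using M1 h(1) many_add.hyps(1) typed_mtyped.many_add by blast
    then show ?thesis using h
      apply -
      apply (rule exI[of _ "ctx_sum G D1"], rule exI[of _ D2], rule exI[of _ "m+m1"], rule exI[of _ m2],
         rule exI[of _ "e+e1"], rule exI[of _ e2], rule exI[of _ "s+s1"], rule exI[of _ s2])
      by (auto simp: ctx_sum_assoc)
  next
    case False
    with prems have "L \<in># M2" by (metis add_mset_add_single union_iff union_single_eq_member)
    then obtain M2' where M2: "M2 = add_mset L M2'" by (metis multi_member_split)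
    with prems have "M = M1 + M2'" by simp
    from many_add.IH(2)[rule_format, OF this] obtain D1 D2 m1 m2 e1 e2 s1 s2 where
      h: "mtyped D1 t M1 m1 e1 s1" "mtyped D2 t M2' m2 e2 s2" "D = ctx_sum D1 D2" "m' = m1 + m2" "e' = e1 + e2" "s' = s1 + s2" by blast
    have "mtyped (ctx_sum G D2) t M2 (m + m2) (e + e2) (s + s2)"
      using M2 h(2) many_add.hyps(1) typed_mtyped.many_add by blast
    then show ?thesis using h
      apply -
      apply (rule exI[of _ D1], rule exI[of _ "ctx_sum G D2"], rule exI[of _ m1], rule exI[of _ "m+m2"],
         rule exI[of _ e1], rule exI[of _ "e+e2"], rule exI[of _ s1], rule exI[of _ "s+s2"])
      by (auto simp: ctx_sum_lcomm)
  qed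
  qed
qed auto

lemma mtyped_split: "mtyped D u (M1 + M2) m e s \<Longrightarrow> \<exists>D1 D2 m1 m2 e1 e2 s1 s2. mtyped D1 u M1 m1 e1 s1 \<and> mtyped D2 u M2 m2 e2 s2
       \<and> D = ctx_sum D1 D2 \<and> m = m1 + m2 \<and> e = e1 + e2 \<and> s = s1 + s2"
  using mtyped_split_aux(2) by blast

lemma mtyped_join_aux:
  shows "typed G t L m e s \<Longrightarrow> True"
  and "mtyped D u M m e s \<Longrightarrow> mtyped D2 u M2 m2 e2 s2 \<Longrightarrow> mtyped (ctx_sum D D2) u (M + M2) (m + m2) (e + e2) (s + s2)"
proof (induction rule: typed_mtyped.inducts)
  case (many_add G t L m e s D M m' e' s')
  from many_add.IH(2)[OF many_add.prems] have "mtyped (ctx_sum D D2) t (M + M2) (m' + m2) (e' + e2) (s' + s2)" .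
  from typed_mtyped.many_add[OF many_add.hyps(1) this] show ?case
    by (auto simp: ctx_sum_assoc add_ac elim!: mtyped_eq)
qed auto

lemma mtyped_join: "mtyped D u M m e s \<Longrightarrow> mtyped D2 u M2 m2 e2 s2 \<Longrightarrow> mtyped (ctx_sum D D2) u (M + M2) (m + m2) (e + e2) (s + s2)"
  using mtyped_join_aux(2) by blast

lemma mtyped_single: "mtyped D u {#L#} m e s \<longleftrightarrow> typed D u L m e s"
proof
  assume "mtyped D u {#L#} m e s"
  then show "typed D u L m e s"
    by (cases rule: mtyped.cases) (auto simp: mtyped_empty_iff)
next
  assume "typed D u L m e s"
  from typed_mtyped.many_add[OF this typed_mtyped.many_empty] show "mtyped D u {#L#} m e s" by simp
qed



lemma shift_single: "shiftc k c (ctx_single x L) = ctx_single (if x < c then x else x + k) L"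
  by (auto simp: cdefs intro!: ext)
lemma shift_empty: "shiftc k c ctx_empty = ctx_empty"
  by (auto simp: cdefs intro!: ext)
lemma shift_sum: "shiftc k c (ctx_sum G D) = ctx_sum (shiftc k c G) (shiftc k c D)"
  by (auto simp: cdefs intro!: ext)
lemma shift_tail: "ctx_tail (shiftc k (Suc c) G) = shiftc k c (ctx_tail G)"
  by (auto simp: cdefs Suc_diff_le intro!: ext)
lemma shift_0: "shiftc k (Suc c) G 0 = G 0"
  by (auto simp: cdefs intro!: ext)

lemma typed_lift:
  shows "typed G t L m e s \<Longrightarrow> typed (shiftc k c G) (lift k c t) L m e s"
  and "mtyped G t M m e s \<Longrightarrow> mtyped (shiftc k c G) (lift k c t) M m e s"
proof (induction arbitrary: c and c rule: typed_mtyped.inducts)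
  case (ax x L)
  then show ?case by (auto simp: shift_single intro: typed_mtyped.ax[unfolded One_nat_def])
next
  case (ax_lam t)
  then show ?case by (simp add: shift_empty ax_lam')
next
  case (lam G t L m e s)
  from typed_mtyped.lam[OF lam.IH[of "Suc c"]] show ?case
    by (simp add: shift_tail shift_0)
next
  case (app G t M L m e s D u m' e' s')
  from typed_mtyped.app[OF app.IH(1) app.IH(2)] show ?case
    by (simp add: shift_sum)
next
  case (es G t L m e s D u m' e' s')
  from typed_mtyped.es[OF es.IH(1)[of "Suc c"], of "shiftc k c D"] es.IH(2)[of c] show ?case
    by (simp add: shift_sum shift_tail shift_0)
next
  case (many_empty t)
  then show ?case by (simp add: shift_empty typed_mtyped.many_empty)
next
  case (many_add G t L m e s D M m' e' s')
  from typed_mtyped.many_add[OF many_add.IH(1) many_add.IH(2)] show ?case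
    by (simp add: shift_sum)
qed

lemma typed_occurs:
  shows "typed G t L m e s \<Longrightarrow> \<not> occurs_free c t \<Longrightarrow> G c = {#}"
  and "mtyped G t M m e s \<Longrightarrow> \<not> occurs_free c t \<Longrightarrow> G c = {#}"
proof (induction arbitrary: c and c rule: typed_mtyped.inducts)
  case (lam G t L m e s)
  then show ?case by (auto simp: cdefs intro!: ext)
next
  case (es G t L m e s D u m' e' s')
  then show ?case by (auto simp: cdefs intro!: ext)
qed (auto simp: cdefs)

lemma low_single: "x \<noteq> c \<Longrightarrow> lowc c (ctx_single x L) = ctx_single (if x < c then x else x - 1) L"
  by (auto simp: cdefs intro!: ext)
lemma low_empty: "lowc c ctx_empty = ctx_empty"
  by (auto simp: cdefs intro!: ext)
lemma low_sum: "lowc c (ctx_sum G D) = ctx_sum (lowc c G) (lowc c D)"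
  by (auto simp: cdefs intro!: ext)
lemma low_tail: "ctx_tail (lowc (Suc c) G) = lowc c (ctx_tail G)"
  by (auto simp: cdefs intro!: ext)
lemma low_0: "lowc (Suc c) G 0 = G 0"
  by (auto simp: cdefs intro!: ext)

lemma typed_lower:
  shows "typed G t L m e s \<Longrightarrow> \<not> occurs_free c t \<Longrightarrow> typed (lowc c G) (lower c t) L m e s"
  and "mtyped G t M m e s \<Longrightarrow> \<not> occurs_free c t \<Longrightarrow> mtyped (lowc c G) (lower c t) M m e s"
proof (induction arbitrary: c and c rule: typed_mtyped.inducts)
  case (ax x L)
  then show ?case by (auto simp: low_single intro: typed_mtyped.ax[unfolded One_nat_def])
next
  case (ax_lam t)
  then show ?case by (simp add: low_empty ax_lam')
next
  case (lam G t L m e s)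
  from lam.prems have "\<not> occurs_free (Suc c) t" by simp
  from typed_mtyped.lam[OF lam.IH[OF this]] show ?case
    by (simp add: low_tail low_0)
next
  case (app G t M L m e s D u m' e' s')
  from app.prems typed_mtyped.app[OF app.IH(1) app.IH(2)] show ?case
    by (simp add: low_sum)
next
  case (es G t L m e s D u m' e' s')
  from es.prems have "\<not> occurs_free (Suc c) t" "\<not> occurs_free c u" by simp_all
  from typed_mtyped.es[OF es.IH(1)[OF this(1)], of "lowc c D"] es.IH(2)[OF this(2)] show ?case
    by (simp add: low_sum low_tail low_0)
next
  case (many_empty t)
  then show ?case by (simp add: low_empty typed_mtyped.many_empty)
next
  case (many_add G t L m e s D M m' e' s')
  from many_add.prems typed_mtyped.many_add[OF many_add.IH(1) many_add.IH(2)] show ?case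
    by (simp add: low_sum)
qed



lemma sum_apply: "ctx_sum a b i = a i + b i" by (simp add: ctx_sum_def)
lemma tail_sum: "ctx_tail (ctx_sum a b) = ctx_sum (ctx_tail a) (ctx_tail b)" by (auto simp: cdefs)
lemma tail_shift1: "ctx_tail (shiftc 1 0 D) = D" "ctx_tail (shiftc (Suc 0) 0 D) = D" by (auto simp: cdefs intro!: ext)
lemma shift1_0: "shiftc 1 0 D 0 = {#}" "shiftc (Suc 0) 0 D 0 = {#}" by (auto simp: cdefs)
lemma tail_msing: "ctx_tail (msing (Suc c) M) = msing c M" by (auto simp: cdefs intro!: ext)
lemma msing_Suc_0: "msing (Suc c) M 0 = {#}" by (auto simp: cdefs)
lemma single_msing: "ctx_single c L = msing c {#L#}" by (auto simp: cdefs intro!: ext)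
lemma msing_empty: "msing c {#} = ctx_empty" by (auto simp: cdefs intro!: ext)
lemma msing_sum: "msing c (A + B) = ctx_sum (msing c A) (msing c B)" by (auto simp: cdefs intro!: ext)

lemmas ctx_ac = ctx_sum_assoc ctx_sum_comm ctx_sum_lcomm

lemma S_m: "typed G (plugS S (Lam t)) (Arr M L) m e s \<Longrightarrow> mtyped D u (M + {#N#}) m2 e2 s2 \<Longrightarrow>
  \<exists>s'. typed (ctx_sum G D) (plugS S (ES t (lift (length S) 0 u))) L (m+m2) (e+e2) s'"
proof (induction S arbitrary: G m e s D u)
  case Nil
  from Nil.prems(1) obtain G1 where "G = ctx_tail G1" "typed G1 t L m e (s - 1)" "M = G1 0"
    by (simp, elim LamE, auto)
  with typed_mtyped.es[OF this(2), of D u] Nil.prems(2) show ?case by auto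
next
  case (Cons v S)
  from Cons.prems(1) obtain G1 D1 m1 e1 s1 m' e' s' where
    h: "G = ctx_sum (ctx_tail G1) D1" "typed G1 (plugS S (Lam t)) (Arr M L) m1 e1 s1"
       "mtyped D1 v (G1 0 + {#N#}) m' e' s'" "m = m1 + m'" "e = e1 + e'"
    by (simp, elim ESE, auto)
  from typed_lift(2)[OF Cons.prems(2), of 1 0]
  have "mtyped (shiftc 1 0 D) (lift 1 0 u) (M + {#N#}) m2 e2 s2" .
  from Cons.IH[OF h(2) this] obtain s'' where
    "typed (ctx_sum G1 (shiftc 1 0 D)) (plugS S (ES t (lift (length S) 0 (lift 1 0 u)))) L (m1 + m2) (e1 + e2) s''" by blast
  from typed_mtyped.es[OF this, of D1 v] h(3)
  have "typed (ctx_sum (ctx_tail (ctx_sum G1 (shiftc 1 0 D))) D1) (ES (plugS S (ES t (lift (length S) 0 (lift 1 0 u)))) v) L (m1 + m2 + m') (e1 + e2 + e') (s'' + s' + 1)"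
    by (simp add: sum_apply shift1_0)
  then show ?case using h
    by (auto simp: tail_sum tail_shift1 lift_lift ctx_ac add_ac)
qed

lemma S_gcv: "typed D (plugS S (Lam b)) N m2 e2 s2 \<Longrightarrow> typed H r L m1 e1 s1 \<Longrightarrow>
  s2 \<ge> 1 \<and> typed (ctx_sum H D) (plugS S (lift (length S) 0 r)) L (m1+m2) (e1+e2) (s1+s2-1)"
proof (induction S arbitrary: D m2 e2 s2 H r)
  case Nil
  from Nil.prems(1) have "D = ctx_empty" "m2 = 0" "e2 = 0" "s2 = 1"
    by (auto elim: LamE)
  with Nil.prems(2) show ?case by simp
next
  case (Cons v S)
  from Cons.prems(1) obtain D1 D2 m e s m' e' s' where
    h: "D = ctx_sum (ctx_tail D1) D2" "typed D1 (plugS S (Lam b)) N m e s"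
       "mtyped D2 v (D1 0 + {#N#}) m' e' s'" "m2 = m + m'" "e2 = e + e'" "s2 = s + s' + 1"
    by (simp, elim ESE, auto)
  from Cons.IH[OF h(2) typed_lift(1)[OF Cons.prems(2), of 1 0]]
  have i: "1 \<le> s" "typed (ctx_sum (shiftc 1 0 H) D1) (plugS S (lift (length S) 0 (lift 1 0 r))) L (m1 + m) (e1 + e) (s1 + s - 1)"
    by auto
  from typed_mtyped.es[OF i(2), of D2 v] h(3)
  have "typed (ctx_sum (ctx_tail (ctx_sum (shiftc 1 0 H) D1)) D2) (ES (plugS S (lift (length S) 0 (lift 1 0 r))) v) L (m1 + m + m') (e1 + e + e') (s1 + s - 1 + s' + 1)"
    by (simp add: sum_apply shift1_0)
  then show ?case using h i(1)
    by (auto simp: tail_sum tail_shift1 lift_lift ctx_ac add_ac elim!: typed_eq)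
qed



definition "Ety F c G L m e \<equiv> \<exists>M' G'. M' \<noteq> {#} \<and> size M' \<le> e \<and> G = ctx_sum G' (msing c M') \<and>
   (\<forall>H m2 e2 s2 r. mtyped H r M' m2 e2 s2 \<longrightarrow> (\<exists>s'. typed (ctx_sum G' H) (F r) L (m+m2) (e+e2-size M') s'))"
definition "Emty F c G M m e \<equiv> \<exists>M' G'. (M \<noteq> {#} \<longrightarrow> M' \<noteq> {#}) \<and> size M' \<le> e \<and> G = ctx_sum G' (msing c M') \<and>
   (\<forall>H m2 e2 s2 r. mtyped H r M' m2 e2 s2 \<longrightarrow> (\<exists>s'. mtyped (ctx_sum G' H) (F r) M (m+m2) (e+e2-size M') s'))"

lemma E_multi_aux:
  shows "typed G T L m e s \<Longrightarrow> True"
  and "mtyped G T M m e s \<Longrightarrow> (\<forall>G L m e s. typed G T L m e s \<longrightarrow> Ety F c G L m e) \<Longrightarrow> Emty F c G M m e"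
proof (induction rule: typed_mtyped.inducts)
  case (many_empty t)
  show ?case unfolding Emty_def
    apply (rule exI[of _ "{#}"], rule exI[of _ ctx_empty])
    by (auto simp: msing_empty mtyped_empty_iff intro: typed_mtyped.many_empty)
next
  case (many_add G t L m e s D M m' e' s')
  from many_add.prems many_add.hyps(1) have "Ety F c G L m e" by blast
  then obtain M1 G1 where a: "M1 \<noteq> {#}" "size M1 \<le> e" "G = ctx_sum G1 (msing c M1)"
    "\<And>H m2 e2 s2 r. mtyped H r M1 m2 e2 s2 \<Longrightarrow> (\<exists>s'. typed (ctx_sum G1 H) (F r) L (m+m2) (e+e2-size M1) s')"
    unfolding Ety_def by blast
  from many_add.IH(2)[OF many_add.prems] obtain M2 D2 where b: "size M2 \<le> e'" "D = ctx_sum D2 (msing c M2)"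
    "\<And>H m2 e2 s2 r. mtyped H r M2 m2 e2 s2 \<Longrightarrow> (\<exists>s'. mtyped (ctx_sum D2 H) (F r) M (m'+m2) (e'+e2-size M2) s')"
    unfolding Emty_def by blast
  show ?case unfolding Emty_def
  proof (rule exI[of _ "M1 + M2"], rule exI[of _ "ctx_sum G1 D2"], intro conjI allI impI)
    show "add_mset L M \<noteq> {#} \<Longrightarrow> M1 + M2 \<noteq> {#}" using a(1) by simp
    show "size (M1 + M2) \<le> e + e'" using a(2) b(1) by simp
    show "ctx_sum G D = ctx_sum (ctx_sum G1 D2) (msing c (M1 + M2))"
      using a(3) b(2) by (simp add: msing_sum ctx_ac)
    fix H m2 e2 s2 r assume "mtyped H r (M1 + M2) m2 e2 s2"
    from mtyped_split[OF this] obtain H1 H2 m21 m22 e21 e22 s21 s22 where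
      c: "mtyped H1 r M1 m21 e21 s21" "mtyped H2 r M2 m22 e22 s22" "H = ctx_sum H1 H2"
        "m2 = m21 + m22" "e2 = e21 + e22" by blast
    from a(4)[OF c(1)] b(3)[OF c(2)] obtain x1 x2 where
      "typed (ctx_sum G1 H1) (F r) L (m+m21) (e+e21-size M1) x1"
      "mtyped (ctx_sum D2 H2) (F r) M (m'+m22) (e'+e22-size M2) x2" by blast
    from typed_mtyped.many_add[OF this]
    show "\<exists>s'. mtyped (ctx_sum (ctx_sum G1 D2) H) (F r) (add_mset L M) (m + m' + m2) (e + e' + e2 - size (M1 + M2)) s'"
      using a(2) b(1) c by (auto simp: ctx_ac elim!: mtyped_eq)
  qed
qed auto

lemma E_multi: "mtyped G T M m e s \<Longrightarrow> (\<forall>G L m e s. typed G T L m e s \<longrightarrow> Ety F c G L m e) \<Longrightarrow> Emty F c G M m e"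
  using E_multi_aux(2) by blast



lemma E_typed: "\<forall>c G L m e s. typed G (plugW W (Var (depthW W + c))) L m e s \<longrightarrow>
   Ety (\<lambda>r. plugW W (lift (depthW W) 0 r)) c G L m e"
proof (induction W)
  case Hole
  show ?case
  proof (intro allI impI)
    fix c G L m e s assume "typed G (plugW Hole (Var (depthW Hole + c))) L m e s"
    then have "G = ctx_single c L" "m = 0" "e = 1" by (auto elim: VarE)
    then show "Ety (\<lambda>r. plugW Hole (lift (depthW Hole) 0 r)) c G L m e"
      unfolding Ety_def
      by (intro exI[of _ "{#L#}"] exI[of _ ctx_empty]) (auto simp: single_msing mtyped_single)
  qed
next
  case (AppL W t2)
  show ?case
  proof (intro allI impI)
    fix c G L m e s assume "typed G (plugW (AppL W t2) (Var (depthW (AppL W t2) + c))) L m e s"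
    then obtain G1 D M m1 e1 s1 m2 e2 s2 where h: "G = ctx_sum G1 D"
      "typed G1 (plugW W (Var (depthW W + c))) (Arr M L) m1 e1 s1" "mtyped D t2 (M + {#N#}) m2 e2 s2"
      "m = m1 + m2 + 1" "e = e1 + e2" by (simp, elim AppE, auto)
    from AppL.IH h(2) obtain M' G1' where a: "M' \<noteq> {#}" "size M' \<le> e1" "G1 = ctx_sum G1' (msing c M')"
      "\<And>H mh eh sh r. mtyped H r M' mh eh sh \<Longrightarrow> (\<exists>s'. typed (ctx_sum G1' H) (plugW W (lift (depthW W) 0 r)) (Arr M L) (m1+mh) (e1+eh-size M') s')"
      unfolding Ety_def by blast
    show "Ety (\<lambda>r. plugW (AppL W t2) (lift (depthW (AppL W t2)) 0 r)) c G L m e"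
      unfolding Ety_def
    proof (rule exI[of _ M'], rule exI[of _ "ctx_sum G1' D"], intro conjI allI impI)
      show "M' \<noteq> {#}" "size M' \<le> e" using a h by auto
      show "G = ctx_sum (ctx_sum G1' D) (msing c M')" using a h by (simp add: ctx_ac)
      fix H mh eh sh r assume "mtyped H r M' mh eh sh"
      from a(4)[OF this] obtain x where "typed (ctx_sum G1' H) (plugW W (lift (depthW W) 0 r)) (Arr M L) (m1+mh) (e1+eh-size M') x" by blast
      from typed_mtyped.app[OF this h(3)]
      show "\<exists>s'. typed (ctx_sum (ctx_sum G1' D) H) (plugW (AppL W t2) (lift (depthW (AppL W t2)) 0 r)) L (m + mh) (e + eh - size M') s'"
        using a h by (auto simp: ctx_ac elim!: typed_eq)
    qed
  qed
next
  case (AppR t1 W)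
  show ?case
  proof (intro allI impI)
    fix c G L m e s assume "typed G (plugW (AppR t1 W) (Var (depthW (AppR t1 W) + c))) L m e s"
    then obtain G1 D M m1 e1 s1 m2 e2 s2 where h: "G = ctx_sum G1 D"
      "typed G1 t1 (Arr M L) m1 e1 s1" "mtyped D (plugW W (Var (depthW W + c))) (M + {#N#}) m2 e2 s2"
      "m = m1 + m2 + 1" "e = e1 + e2" by (simp, elim AppE, auto)
    from E_multi[OF h(3)] AppR.IH have "Emty (\<lambda>r. plugW W (lift (depthW W) 0 r)) c D (M + {#N#}) m2 e2" by blast
    then obtain M' D' where a: "M' \<noteq> {#}" "size M' \<le> e2" "D = ctx_sum D' (msing c M')"
      "\<And>H mh eh sh r. mtyped H r M' mh eh sh \<Longrightarrow> (\<exists>s'. mtyped (ctx_sum D' H) (plugW W (lift (depthW W) 0 r)) (M + {#N#}) (m2+mh) (e2+eh-size M') s')"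
      unfolding Emty_def by auto
    show "Ety (\<lambda>r. plugW (AppR t1 W) (lift (depthW (AppR t1 W)) 0 r)) c G L m e"
      unfolding Ety_def
    proof (rule exI[of _ M'], rule exI[of _ "ctx_sum G1 D'"], intro conjI allI impI)
      show "M' \<noteq> {#}" "size M' \<le> e" using a h by auto
      show "G = ctx_sum (ctx_sum G1 D') (msing c M')" using a h by (simp add: ctx_ac)
      fix H mh eh sh r assume "mtyped H r M' mh eh sh"
      from a(4)[OF this] obtain x where "mtyped (ctx_sum D' H) (plugW W (lift (depthW W) 0 r)) (M + {#N#}) (m2+mh) (e2+eh-size M') x" by blast
      from typed_mtyped.app[OF h(2) this]
      show "\<exists>s'. typed (ctx_sum (ctx_sum G1 D') H) (plugW (AppR t1 W) (lift (depthW (AppR t1 W)) 0 r)) L (m + mh) (e + eh - size M') s'"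
        using a h by (auto simp: ctx_ac elim!: typed_eq)
    qed
  qed
next
  case (ESR t1 W)
  show ?case
  proof (intro allI impI)
    fix c G L m e s assume "typed G (plugW (ESR t1 W) (Var (depthW (ESR t1 W) + c))) L m e s"
    then obtain G1 D m1 e1 s1 m2 e2 s2 where h: "G = ctx_sum (ctx_tail G1) D"
      "typed G1 t1 L m1 e1 s1" "mtyped D (plugW W (Var (depthW W + c))) (G1 0 + {#N#}) m2 e2 s2"
      "m = m1 + m2" "e = e1 + e2" by (simp, elim ESE, auto)
    from E_multi[OF h(3)] ESR.IH have "Emty (\<lambda>r. plugW W (lift (depthW W) 0 r)) c D (G1 0 + {#N#}) m2 e2" by blast
    then obtain M' D' where a: "M' \<noteq> {#}" "size M' \<le> e2" "D = ctx_sum D' (msing c M')"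
      "\<And>H mh eh sh r. mtyped H r M' mh eh sh \<Longrightarrow> (\<exists>s'. mtyped (ctx_sum D' H) (plugW W (lift (depthW W) 0 r)) (G1 0 + {#N#}) (m2+mh) (e2+eh-size M') s')"
      unfolding Emty_def by auto
    show "Ety (\<lambda>r. plugW (ESR t1 W) (lift (depthW (ESR t1 W)) 0 r)) c G L m e"
      unfolding Ety_def
    proof (rule exI[of _ M'], rule exI[of _ "ctx_sum (ctx_tail G1) D'"], intro conjI allI impI)
      show "M' \<noteq> {#}" "size M' \<le> e" using a h by auto
      show "G = ctx_sum (ctx_sum (ctx_tail G1) D') (msing c M')" using a h by (simp add: ctx_ac)
      fix H mh eh sh r assume "mtyped H r M' mh eh sh"
      from a(4)[OF this] obtain x where "mtyped (ctx_sum D' H) (plugW W (lift (depthW W) 0 r)) (G1 0 + {#N#}) (m2+mh) (e2+eh-size M') x" by blast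
      from typed_mtyped.es[OF h(2) this]
      show "\<exists>s'. typed (ctx_sum (ctx_sum (ctx_tail G1) D') H) (plugW (ESR t1 W) (lift (depthW (ESR t1 W)) 0 r)) L (m + mh) (e + eh - size M') s'"
        using a h by (auto simp: ctx_ac elim!: typed_eq)
    qed
  qed
next
  case (ESL W u)
  show ?case
  proof (intro allI impI)
    fix c G L m e s assume "typed G (plugW (ESL W u) (Var (depthW (ESL W u) + c))) L m e s"
    then have "typed G (ES (plugW W (Var (depthW W + Suc c))) u) L m e s" by simp
    then obtain G1 D m1 e1 s1 m2 e2 s2 where h: "G = ctx_sum (ctx_tail G1) D"
      "typed G1 (plugW W (Var (depthW W + Suc c))) L m1 e1 s1" "mtyped D u (G1 0 + {#N#}) m2 e2 s2"
      "m = m1 + m2" "e = e1 + e2" by (elim ESE, auto)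
    from ESL.IH h(2) obtain M' G1' where a: "M' \<noteq> {#}" "size M' \<le> e1" "G1 = ctx_sum G1' (msing (Suc c) M')"
      "\<And>H mh eh sh r. mtyped H r M' mh eh sh \<Longrightarrow> (\<exists>s'. typed (ctx_sum G1' H) (plugW W (lift (depthW W) 0 r)) L (m1+mh) (e1+eh-size M') s')"
      unfolding Ety_def by blast
    show "Ety (\<lambda>r. plugW (ESL W u) (lift (depthW (ESL W u)) 0 r)) c G L m e"
      unfolding Ety_def
    proof (rule exI[of _ M'], rule exI[of _ "ctx_sum (ctx_tail G1') D"], intro conjI allI impI)
      show "M' \<noteq> {#}" "size M' \<le> e" using a h by auto
      show "G = ctx_sum (ctx_sum (ctx_tail G1') D) (msing c M')" using a h by (simp add: ctx_ac tail_sum tail_msing)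
      fix H mh eh sh r assume "mtyped H r M' mh eh sh"
      from a(4)[OF typed_lift(2)[OF this, of 1 0]] obtain x where
        x: "typed (ctx_sum G1' (shiftc 1 0 H)) (plugW W (lift (depthW W) 0 (lift 1 0 r))) L (m1+mh) (e1+eh-size M') x" by blast
      have "G1 0 = ctx_sum G1' (shiftc 1 0 H) 0" using a(3) by (simp add: sum_apply shift1_0 msing_Suc_0)
      with h(3) have "mtyped D u (ctx_sum G1' (shiftc 1 0 H) 0 + {#N#}) m2 e2 s2" by simp
      from typed_mtyped.es[OF x this]
      show "\<exists>s'. typed (ctx_sum (ctx_sum (ctx_tail G1') D) H) (plugW (ESL W u) (lift (depthW (ESL W u)) 0 r)) L (m + mh) (e + eh - size M') s'"
        using a h by (auto simp: ctx_ac tail_sum tail_shift1 lift_lift elim!: typed_eq)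
    qed
  qed
qed



lemma W_multi_aux:
  fixes R :: "nat \<Rightarrow> nat \<Rightarrow> nat \<Rightarrow> nat \<Rightarrow> nat \<Rightarrow> nat \<Rightarrow> bool"
  assumes addR: "\<And>a b c a' b' c' x y z x' y' z'. R a b c a' b' c' \<Longrightarrow> R x y z x' y' z' \<Longrightarrow> R (a+x) (b+y) (c+z) (a'+x') (b'+y') (c'+z')"
  shows "typed G T L m e s \<Longrightarrow> True"
  and "mtyped G T M m e s \<Longrightarrow> (\<forall>G L m e s. typed G T L m e s \<longrightarrow> (\<exists>m' e' s'. typed G T' L m' e' s' \<and> R m e s m' e' s'))
     \<Longrightarrow> M \<noteq> {#} \<Longrightarrow> \<exists>m' e' s'. mtyped G T' M m' e' s' \<and> R m e s m' e' s'"
proof (induction rule: typed_mtyped.inducts)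
  case (many_add G t L m e s D M m' e' s')
  from many_add.prems(1) many_add.hyps(1) obtain m1 e1 s1 where a: "typed G T' L m1 e1 s1" "R m e s m1 e1 s1" by blast
  show ?case
  proof (cases "M = {#}")
    case True
    with many_add.hyps(2) have "D = ctx_empty" "m' = 0" "e' = 0" "s' = 0" by (auto simp: mtyped_empty_iff)
    with typed_mtyped.many_add[OF a(1) typed_mtyped.many_empty] a(2) True show ?thesis by auto
  next
    case False
    from many_add.IH(2)[OF many_add.prems(1) False] obtain m2 e2 s2 where "mtyped D T' M m2 e2 s2" "R m' e' s' m2 e2 s2" by blast
    from typed_mtyped.many_add[OF a(1) this(1)] addR[OF a(2) this(2)] show ?thesis by blast
  qed
qed auto

lemma W_gen:
  fixes R :: "nat \<Rightarrow> nat \<Rightarrow> nat \<Rightarrow> nat \<Rightarrow> nat \<Rightarrow> nat \<Rightarrow> bool"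
  assumes step: "\<And>G L m e s. typed G t L m e s \<Longrightarrow> \<exists>m' e' s'. typed G t' L m' e' s' \<and> R m e s m' e' s'"
  and addR: "\<And>a b c a' b' c' x y z x' y' z'. R a b c a' b' c' \<Longrightarrow> R x y z x' y' z' \<Longrightarrow> R (a+x) (b+y) (c+z) (a'+x') (b'+y') (c'+z')"
  and constR: "\<And>a b c a' b' c' x y z. R a b c a' b' c' \<Longrightarrow> R (a+x) (b+y) (c+z) (a'+x) (b'+y) (c'+z)"
  shows "\<forall>G L m e s. typed G (plugW W t) L m e s \<longrightarrow> (\<exists>m' e' s'. typed G (plugW W t') L m' e' s' \<and> R m e s m' e' s')"
proof (induction W)
  case Hole
  then show ?case using step by simp
next
  case (AppL W t2)
  show ?case
  proof (intro allI impI)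
    fix G L m e s assume "typed G (plugW (AppL W t2) t) L m e s"
    then obtain G1 D M m1 e1 s1 m2 e2 s2 where h: "G = ctx_sum G1 D"
      "typed G1 (plugW W t) (Arr M L) m1 e1 s1" "mtyped D t2 (M + {#N#}) m2 e2 s2"
      "m = m1 + m2 + 1" "e = e1 + e2" "s = s1 + s2 + 1" by (simp, elim AppE, auto)
    from AppL.IH h(2) obtain a b c where "typed G1 (plugW W t') (Arr M L) a b c" "R m1 e1 s1 a b c" by blast
    from typed_mtyped.app[OF this(1) h(3)] constR[OF this(2), of "m2+1" e2 "s2+1"] h
    show "\<exists>m' e' s'. typed G (plugW (AppL W t2) t') L m' e' s' \<and> R m e s m' e' s'"
      by (auto simp: add_ac)
  qed
next
  case (AppR t1 W)
  show ?case
  proof (intro allI impI)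
    fix G L m e s assume "typed G (plugW (AppR t1 W) t) L m e s"
    then obtain G1 D M m1 e1 s1 m2 e2 s2 where h: "G = ctx_sum G1 D"
      "typed G1 t1 (Arr M L) m1 e1 s1" "mtyped D (plugW W t) (M + {#N#}) m2 e2 s2"
      "m = m1 + m2 + 1" "e = e1 + e2" "s = s1 + s2 + 1" by (simp, elim AppE, auto)
    from W_multi_aux(2)[OF addR h(3) AppR.IH] obtain a b c where "mtyped D (plugW W t') (M + {#N#}) a b c" "R m2 e2 s2 a b c" by auto
    from typed_mtyped.app[OF h(2) this(1)] constR[OF this(2), of "m1+1" e1 "s1+1"] h
    show "\<exists>m' e' s'. typed G (plugW (AppR t1 W) t') L m' e' s' \<and> R m e s m' e' s'"
      by (auto simp: add_ac)
  qed
next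
  case (ESR t1 W)
  show ?case
  proof (intro allI impI)
    fix G L m e s assume "typed G (plugW (ESR t1 W) t) L m e s"
    then obtain G1 D m1 e1 s1 m2 e2 s2 where h: "G = ctx_sum (ctx_tail G1) D"
      "typed G1 t1 L m1 e1 s1" "mtyped D (plugW W t) (G1 0 + {#N#}) m2 e2 s2"
      "m = m1 + m2" "e = e1 + e2" "s = s1 + s2 + 1" by (simp, elim ESE, auto)
    from W_multi_aux(2)[OF addR h(3) ESR.IH] obtain a b c where "mtyped D (plugW W t') (G1 0 + {#N#}) a b c" "R m2 e2 s2 a b c" by auto
    from typed_mtyped.es[OF h(2) this(1)] constR[OF this(2), of "m1" e1 "s1+1"] h
    show "\<exists>m' e' s'. typed G (plugW (ESR t1 W) t') L m' e' s' \<and> R m e s m' e' s'"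
      by (auto simp: add_ac)
  qed
next
  case (ESL W u)
  show ?case
  proof (intro allI impI)
    fix G L m e s assume "typed G (plugW (ESL W u) t) L m e s"
    then obtain G1 D m1 e1 s1 m2 e2 s2 where h: "G = ctx_sum (ctx_tail G1) D"
      "typed G1 (plugW W t) L m1 e1 s1" "mtyped D u (G1 0 + {#N#}) m2 e2 s2"
      "m = m1 + m2" "e = e1 + e2" "s = s1 + s2 + 1" by (simp, elim ESE, auto)
    from ESL.IH h(2) obtain a b c where "typed G1 (plugW W t') L a b c" "R m1 e1 s1 a b c" by blast
    from typed_mtyped.es[OF this(1) h(3)] constR[OF this(2), of m2 e2 "s2+1"] h
    show "\<exists>m' e' s'. typed G (plugW (ESL W u) t') L m' e' s' \<and> R m e s m' e' s'"
      by (auto simp: add_ac)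
  qed
qed

lemma root_m_typed: "root_m t t' \<Longrightarrow> typed G t L m e s \<Longrightarrow> \<exists>m' e' s'. typed G t' L m' e' s' \<and> (m' < m \<and> e' = e)"
proof (induction rule: root_m.induct)
  case (1 S b u)
  then obtain G1 D M m1 e1 s1 m2 e2 s2 where h: "G = ctx_sum G1 D"
      "typed G1 (plugS S (Lam b)) (Arr M L) m1 e1 s1" "mtyped D u (M + {#N#}) m2 e2 s2"
      "m = m1 + m2 + 1" "e = e1 + e2" by (elim AppE, auto)
  from S_m[OF h(2,3)] h show ?case by auto
qed

lemma root_e_typed: "root_e t t' \<Longrightarrow> typed G t L m e s \<Longrightarrow> \<exists>m' e' s'. typed G t' L m' e' s' \<and> (m' = m \<and> e' < e)"
proof (induction rule: root_e.induct)
  case (1 W u)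
  then obtain G1 D m1 e1 s1 m2 e2 s2 where h: "G = ctx_sum (ctx_tail G1) D"
      "typed G1 (plugW W (Var (depthW W + 0))) L m1 e1 s1" "mtyped D u (G1 0 + {#N#}) m2 e2 s2"
      "m = m1 + m2" "e = e1 + e2" by (elim ESE, auto)
  from E_typed h(2) obtain M' G1' where a: "M' \<noteq> {#}" "size M' \<le> e1" "G1 = ctx_sum G1' (msing 0 M')"
      "\<And>H mh eh sh r. mtyped H r M' mh eh sh \<Longrightarrow> (\<exists>s'. typed (ctx_sum G1' H) (plugW W (lift (depthW W) 0 r)) L (m1+mh) (e1+eh-size M') s')"
      unfolding Ety_def by blast
  from h(3) a(3) have "mtyped D u (M' + (G1' 0 + {#N#})) m2 e2 s2" by (simp add: sum_apply msing_def add_ac)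
  from mtyped_split[OF this] obtain Da Db ma mb ea eb sa sb where
    c: "mtyped Da u M' ma ea sa" "mtyped Db u (G1' 0 + {#N#}) mb eb sb" "D = ctx_sum Da Db"
        "m2 = ma + mb" "e2 = ea + eb" by blast
  from a(4)[OF typed_lift(2)[OF c(1), of 1 0]] obtain x where
    x: "typed (ctx_sum G1' (shiftc 1 0 Da)) (plugW W (lift (depthW W) 0 (lift 1 0 u))) L (m1+ma) (e1+ea-size M') x" by blast
  have "G1' 0 = ctx_sum G1' (shiftc 1 0 Da) 0" by (simp add: sum_apply shift1_0)
  with c(2) have "mtyped Db u (ctx_sum G1' (shiftc 1 0 Da) 0 + {#N#}) mb eb sb" by simp
  from typed_mtyped.es[OF x this]
  have "typed (ctx_sum (ctx_tail (ctx_sum G1' (shiftc 1 0 Da))) Db) (ES (plugW W (lift (depthW W) 0 (lift 1 0 u))) u) L (m1 + ma + mb) (e1 + ea - size M' + eb) (x + sb + 1)" .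
  moreover have "ctx_sum (ctx_tail (ctx_sum G1' (shiftc 1 0 Da))) Db = G"
    using h(1) a(3) c(3) by (simp add: tail_sum tail_shift1 ctx_ac msing_empty[symmetric] cdefs add_ac)
  moreover have "size M' \<ge> 1" using a(1) by (simp add: Suc_le_eq nonempty_has_size)
  ultimately show ?case using h a(2) c
    by (intro exI[of _ "m1 + ma + mb"] exI[of _ "e1 + ea - size M' + eb"] exI[of _ "x + sb + 1"]) (auto simp: lift_lift)
qed

lemma root_gcv_typed: "root_gcv t t' \<Longrightarrow> typed G t L m e s \<Longrightarrow> \<exists>m' e' s'. typed G t' L m' e' s' \<and> (m' = m \<and> e' = e \<and> s' < s)"
proof (induction rule: root_gcv.induct)
  case (1 b v S)
  then obtain G1 D m1 e1 s1 m2 e2 s2 where h: "G = ctx_sum (ctx_tail G1) D"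
      "typed G1 b L m1 e1 s1" "mtyped D (plugS S v) (G1 0 + {#N#}) m2 e2 s2"
      "m = m1 + m2" "e = e1 + e2" "s = s1 + s2 + 1" by (elim ESE, auto)
  from typed_occurs(1)[OF h(2) 1(1)] h(3) have "typed D (plugS S v) N m2 e2 s2" by (simp add: mtyped_single)
  moreover from 1(2) obtain bb where "v = Lam bb" by (cases v) auto
  ultimately have t: "typed D (plugS S (Lam bb)) N m2 e2 s2" by simp
  from typed_lower(1)[OF h(2) 1(1)] have "typed (ctx_tail G1) (lower 0 b) L m1 e1 s1"
    by (simp add: lowc_def ctx_tail_def)
  from S_gcv[OF t this] h show ?case by auto
qed

theorem proposition6p1:
  assumes "typed G t L m e s"
  shows "(wm t u \<longrightarrow> m \<ge> 1 \<and> (\<exists>m' s'. typed G u L m' e s' \<and> m > m'))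
       \<and> (we t u \<longrightarrow> e \<ge> 1 \<and> (\<exists>e' s'. typed G u L m e' s' \<and> e > e'))
       \<and> (wgcv t u \<longrightarrow> (\<exists>s'. typed G u L m e s' \<and> s > s'))"
proof -
  have A: "wm t u \<longrightarrow> m \<ge> 1 \<and> (\<exists>m' s'. typed G u L m' e s' \<and> m > m')"
  proof
  assume "wm t u"
  then obtain W r r' where "t = plugW W r" "u = plugW W r'" "root_m r r'" by (cases) auto
  from W_gen[of r r' "\<lambda>m e s m' e' s'. m' < m \<and> e' = e", OF root_m_typed[OF this(3)]] assms this
  obtain m' e' s' where "typed G u L m' e' s'" "m' < m \<and> e' = e" by fastforce
  then show "1 \<le> m \<and> (\<exists>m' s'. typed G u L m' e s' \<and> m' < m)" by auto
  qed
  have B: "we t u \<longrightarrow> e \<ge> 1 \<and> (\<exists>e' s'. typed G u L m e' s' \<and> e > e')"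
  proof
  assume "we t u"
  then obtain W r r' where "t = plugW W r" "u = plugW W r'" "root_e r r'" by (cases) auto
  from W_gen[of r r' "\<lambda>m e s m' e' s'. m' = m \<and> e' < e", OF root_e_typed[OF this(3)]] assms this
  obtain m' e' s' where "typed G u L m' e' s'" "m' = m \<and> e' < e" by fastforce
  then show "1 \<le> e \<and> (\<exists>e' s'. typed G u L m e' s' \<and> e' < e)" by auto
  qed
  have C: "wgcv t u \<longrightarrow> (\<exists>s'. typed G u L m e s' \<and> s > s')"
  proof
  assume "wgcv t u"
  then obtain W r r' where "t = plugW W r" "u = plugW W r'" "root_gcv r r'" by (cases) auto
  from W_gen[of r r' "\<lambda>m e s m' e' s'. m' = m \<and> e' = e \<and> s' < s", OF root_gcv_typed[OF this(3)]] assms this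
  obtain m' e' s' where "typed G u L m' e' s'" "m' = m \<and> e' = e \<and> s' < s" by fastforce
  then show "\<exists>s'. typed G u L m e s' \<and> s' < s" by auto
  qed
  from A B C show ?thesis by blast
qed

end
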